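(* Let $X=\{x_1,\dots,x_S\}\subset\mathbb{R}^A$ be finite and $K\ge1$. In the reduced-space branch and bound algorithm for the $K$-center problem described in the context, the bounding operation is finitely consistent: at every step any unfathomed node can be further refined, and every decreasing sequence $\{M_{l_q}\}$ of successively refined nodes is finite.
   Context: The $K$-center problem is $z=\min_{\mu^1,\dots,\mu^K\in X}\max_s\min_k\|x_s-\mu^k\|_2^2$. Root region: the box $M_0=M_0^1\times\cdots\times M_0^K$, $M_0^k=\{\mu^k:\min_s x_{s,a}\le\mu^k_a\le\max_s x_{s,a}\ \forall a\}$. Nodes are boxes $M=M^1\times\cdots\times M^K$. Lower bound $\beta(M)=\max_s\min_k\min_{\mu^k\in M^k}\|x_s-\mu^k\|_2^2$; upper bound $\alpha(M)$ is the objective value at a feasible $\hat\mu\in X\cap M$. Algorithm: maintain a list of nodes; repeatedly remove a node with least lower bound, tighten it (shrinking boxes without excluding optimal solutions, including replacing each $M^k$ by the smallest box containing $X\cap M^k$); if $|X\cap M^k|>1$ for some $k$, bisect at its midpoint the coordinate $\mu^k_a$ of largest range, keeping a child only if each of its $K$ boxes contains a sample; update the best lower bound $\beta_i$ (minimum over the list) and best upper bound $\alpha_i$; delete nodes with $\beta(M')\ge\alpha_i$; stop if $\alpha_i-\beta_i\le\epsilon$ (tolerance $\epsilon>0$) or the list is empty. A node is unfathomed if it has not been deleted and not terminated. A bounding operation is called finitely consistent if, at every step, any unfathomed partition element can be further refined and any decreasing sequence of successively refined partition elements is finite. *)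

theory Defs
  imports "HOL-Analysis.Analysis"
begin

text \<open>Sample points live in \<open>real^'n\<close> (R^A with A = CARD('n)).
  A box is given by its lower and upper corner; a node is a family of boxes
  M k (only k < K is relevant), one box per center.\<close>

type_synonym 'n kbox = "(real^'n) \<times> (real^'n)"
type_synonym 'n node = "nat \<Rightarrow> 'n kbox"

definition boxset :: "'n::finite kbox \<Rightarrow> (real^'n) set" where
  "boxset B = cbox (fst B) (snd B)"

definition kcenter_obj :: "(real^'n::finite) set \<Rightarrow> nat \<Rightarrow> (nat \<Rightarrow> real^'n) \<Rightarrow> real" where
  "kcenter_obj X K mu = Max ((\<lambda>x. Min ((\<lambda>k. (norm (x - mu k))\<^sup>2) ` {..<K})) ` X)"

definition lower_bound :: "(real^'n::finite) set \<Rightarrow> nat \<Rightarrow> 'n node \<Rightarrow> real" where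
  "lower_bound X K M =
     Max ((\<lambda>x. Min ((\<lambda>k. INF m\<in>boxset (M k). (norm (x - m))\<^sup>2) ` {..<K})) ` X)"

definition node_valid :: "(real^'n::finite) set \<Rightarrow> nat \<Rightarrow> 'n node \<Rightarrow> bool" where
  "node_valid X K M \<longleftrightarrow> (\<forall>k<K. X \<inter> boxset (M k) \<noteq> {})"

definition hullbox :: "(real^'n::finite) set \<Rightarrow> 'n kbox \<Rightarrow> 'n kbox" where
  "hullbox X B = ((\<chi> a. Min ((\<lambda>x. x $ a) ` (X \<inter> boxset B))),
                  (\<chi> a. Max ((\<lambda>x. x $ a) ` (X \<inter> boxset B))))"

definition tighten :: "(real^'n::finite) set \<Rightarrow> 'n node \<Rightarrow> 'n node" where
  "tighten X M = (\<lambda>k. hullbox X (M k))"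

text \<open>Refinement step: tighten M, then (if some box contains more than one sample)
  bisect at its midpoint a coordinate of largest range of such a box; C is a kept child
  (every box of C contains a sample).\<close>
definition refine_child :: "(real^'n::finite) set \<Rightarrow> nat \<Rightarrow> 'n node \<Rightarrow> 'n node \<Rightarrow> bool" where
  "refine_child X K M C \<longleftrightarrow>
     (let T = tighten X M in
      \<exists>k<K. \<exists>a. card (X \<inter> boxset (T k)) > 1 \<and>
        (\<forall>a'. snd (T k) $ a' - fst (T k) $ a' \<le> snd (T k) $ a - fst (T k) $ a) \<and>
        (let l = fst (T k); u = snd (T k); mid = (l $ a + u $ a) / 2 in
          (C = T(k := (l, \<chi> i. if i = a then mid else u $ i)) \<or>
           C = T(k := (\<chi> i. if i = a then mid else l $ i, u)))) \<and>
        node_valid X K C)"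

end

theory Submission
  imports Defs
begin

lemma mem_boxset: "x \<in> boxset B \<longleftrightarrow> (\<forall>i. fst B $ i \<le> x $ i \<and> x $ i \<le> snd B $ i)"
  unfolding boxset_def by (simp add: mem_box_cart)

lemma hull_same:
  assumes "finite X" "X \<inter> boxset B \<noteq> {}"
  shows "X \<inter> boxset (hullbox X B) = X \<inter> boxset B"
proof
  let ?S = "X \<inter> boxset B"
  have fin: "finite ?S" using assms by simp
  show "X \<inter> boxset B \<subseteq> X \<inter> boxset (hullbox X B)"
  proof
    fix x assume x: "x \<in> ?S"
    show "x \<in> X \<inter> boxset (hullbox X B)"
      using x fin by (auto simp: hullbox_def boxset_def mem_box_cart)
  qed
  show "X \<inter> boxset (hullbox X B) \<subseteq> X \<inter> boxset B"
  proof
    fix x assume x: "x \<in> X \<inter> boxset (hullbox X B)"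
    have "fst B $ i \<le> x $ i \<and> x $ i \<le> snd B $ i" for i
    proof -
      have m1: "Min ((\<lambda>x. x $ i) ` ?S) \<in> (\<lambda>x. x $ i) ` ?S"
        using fin assms(2) by (intro Min_in) auto
      have m2: "Max ((\<lambda>x. x $ i) ` ?S) \<in> (\<lambda>x. x $ i) ` ?S"
        using fin assms(2) by (intro Max_in) auto
      from m1 obtain p where p: "p \<in> ?S" "p $ i = Min ((\<lambda>x. x $ i) ` ?S)" by auto
      from m2 obtain q where q: "q \<in> ?S" "q $ i = Max ((\<lambda>x. x $ i) ` ?S)" by auto
      have "Min ((\<lambda>x. x $ i) ` ?S) \<le> x $ i" "x $ i \<le> Max ((\<lambda>x. x $ i) ` ?S)"
        using x by (auto simp: hullbox_def boxset_def mem_box_cart)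
      moreover have "fst B $ i \<le> p $ i" "q $ i \<le> snd B $ i" using p(1) q(1) by (auto simp: boxset_def mem_box_cart)
      ultimately show ?thesis using p q by auto
    qed
    then show "x \<in> X \<inter> boxset B" using x by (auto simp: boxset_def mem_box_cart)
  qed
qed

lemma hull_single:
  assumes "X \<inter> boxset B = {x}"
  shows "boxset (hullbox X B) = {x}"
proof -
  have "hullbox X B = (x, x)" unfolding hullbox_def assms by (simp add: vec_eq_iff)
  then show ?thesis unfolding boxset_def by simp
qed

lemma tight_props:
  assumes "finite X" "X \<inter> boxset B \<noteq> {}"
  and "card (X \<inter> boxset (hullbox X B)) > 1"
  and amax: "\<forall>a'. snd (hullbox X B) $ a' - fst (hullbox X B) $ a' \<le> snd (hullbox X B) $ a - fst (hullbox X B) $ a"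
  shows "\<exists>y \<in> X \<inter> boxset B. y $ a = snd (hullbox X B) $ a"
    "\<exists>z \<in> X \<inter> boxset B. z $ a = fst (hullbox X B) $ a"
    "fst (hullbox X B) $ a < snd (hullbox X B) $ a"
    "\<forall>i. fst (hullbox X B) $ i \<le> snd (hullbox X B) $ i"
proof -
  let ?S = "X \<inter> boxset B"
  have fin: "finite ?S" using assms by simp
  have fst_eq: "fst (hullbox X B) $ i = Min ((\<lambda>x. x $ i) ` ?S)" for i unfolding hullbox_def by simp
  have snd_eq: "snd (hullbox X B) $ i = Max ((\<lambda>x. x $ i) ` ?S)" for i unfolding hullbox_def by simp
  show "\<exists>y \<in> X \<inter> boxset B. y $ a = snd (hullbox X B) $ a"
  proof -
    have "Max ((\<lambda>x. x $ a) ` ?S) \<in> (\<lambda>x. x $ a) ` ?S"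
      using fin assms(2) by (intro Max_in) auto
    then show ?thesis unfolding snd_eq by auto
  qed
  show "\<exists>z \<in> X \<inter> boxset B. z $ a = fst (hullbox X B) $ a"
  proof -
    have "Min ((\<lambda>x. x $ a) ` ?S) \<in> (\<lambda>x. x $ a) ` ?S"
      using fin assms(2) by (intro Min_in) auto
    then show ?thesis unfolding fst_eq by auto
  qed
  have le: "fst (hullbox X B) $ i \<le> p $ i \<and> p $ i \<le> snd (hullbox X B) $ i" if "p \<in> ?S" for p i
    unfolding fst_eq snd_eq using fin that by auto
  obtain p where p: "p \<in> ?S" using assms(2) by auto
  show "\<forall>i. fst (hullbox X B) $ i \<le> snd (hullbox X B) $ i" using le[OF p] order_trans by blast
  have "card ?S > 1" using assms(3) hull_same[OF assms(1,2)] by simp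
  then obtain p q where pq: "p \<in> ?S" "q \<in> ?S" "p \<noteq> q"
    by (metis One_nat_def card_le_Suc0_iff_eq fin not_le)
  then obtain i where "p $ i \<noteq> q $ i" by (auto simp: vec_eq_iff)
  then have "fst (hullbox X B) $ i < snd (hullbox X B) $ i" using le[OF pq(1), of i] le[OF pq(2), of i] by auto
  then show "fst (hullbox X B) $ a < snd (hullbox X B) $ a" using amax[rule_format, of i] by linarith
qed



lemma part1:
  assumes fin: "finite X" and K: "K \<ge> 1" and valid: "node_valid X K M"
  and mu: "\<forall>k<K. mu k \<in> X \<inter> boxset (tighten X M k)"
  and al: "alpha \<le> kcenter_obj X K mu" and lb: "lower_bound X K (tighten X M) < alpha"
  shows "\<exists>C. refine_child X K M C"
proof -
  define T where "T = tighten X M"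
  have same: "X \<inter> boxset (T k) = X \<inter> boxset (M k)" if "k < K" for k
    using hull_same[OF fin] valid that unfolding T_def tighten_def node_valid_def by auto
  have "\<exists>k<K. card (X \<inter> boxset (T k)) > 1"
  proof (rule ccontr)
    assume "\<not> ?thesis"
    then have c: "card (X \<inter> boxset (T k)) \<le> 1" if "k < K" for k using that by auto
    have single: "X \<inter> boxset (M k) = {mu k}" if "k < K" for k
    proof -
      have "mu k \<in> X \<inter> boxset (T k)" using mu that T_def by auto
      moreover have "finite (X \<inter> boxset (T k))" using fin by simp
      ultimately show ?thesis using c[OF that] same[OF that]
        by (metis card_le_Suc0_iff_eq One_nat_def insertI1 subsetI subset_singletonD singletonD equals0D)
    qed
    have bs: "boxset (T k) = {mu k}" if "k < K" for k
      using hull_single[OF single[OF that]] unfolding T_def tighten_def by simp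
    have "lower_bound X K T = kcenter_obj X K mu"
      unfolding lower_bound_def kcenter_obj_def
      by (intro arg_cong[where f=Max] image_cong refl arg_cong[where f=Min]) (simp add: bs)
    then show False using al lb T_def by simp
  qed
  then obtain k where k: "k < K" "card (X \<inter> boxset (T k)) > 1" by auto
  define f where "f = (\<lambda>a'. snd (T k) $ a' - fst (T k) $ a')"
  have "Max (range f) \<in> range f" by (intro Max_in) auto
  then obtain a where a: "f a = Max (range f)" by (metis rangeE)
  have amax: "\<forall>a'. f a' \<le> f a" unfolding a by auto
  obtain x where x: "x \<in> X \<inter> boxset (T k)" using k(2) by (metis card.empty equals0I not_less0)
  define l where "l = fst (T k)"
  define u where "u = snd (T k)"
  define mid where "mid = (l $ a + u $ a) / 2"
  define C1 where "C1 = T(k := (l, \<chi> i. if i = a then mid else u $ i))"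
  define C2 where "C2 = T(k := (\<chi> i. if i = a then mid else l $ i, u))"
  have others: "X \<inter> boxset (T j) \<noteq> {}" if "j < K" for j using mu that T_def by auto
  have xb: "\<forall>i. l $ i \<le> x $ i \<and> x $ i \<le> u $ i" using x unfolding l_def u_def by (auto simp: boxset_def mem_box_cart)
  show ?thesis
  proof (cases "x $ a \<le> mid")
    case True
    have "node_valid X K C1" unfolding node_valid_def
    proof (intro allI impI)
      fix j assume j: "j < K"
      show "X \<inter> boxset (C1 j) \<noteq> {}"
      proof (cases "j = k")
        case True
        have "x \<in> X \<inter> boxset (C1 j)" using x xb \<open>x $ a \<le> mid\<close> True unfolding C1_def
          by (auto simp: boxset_def mem_box_cart)
        then show ?thesis by auto
      qed (use others j C1_def in auto)
    qed
    then have "refine_child X K M C1" unfolding refine_child_def Let_def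
      using k amax C1_def l_def u_def mid_def T_def f_def by blast
    then show ?thesis by blast
  next
    case False
    have "node_valid X K C2" unfolding node_valid_def
    proof (intro allI impI)
      fix j assume j: "j < K"
      show "X \<inter> boxset (C2 j) \<noteq> {}"
      proof (cases "j = k")
        case True
        have "x \<in> X \<inter> boxset (C2 j)" using x xb False True unfolding C2_def
          by (auto simp: boxset_def mem_box_cart)
        then show ?thesis by auto
      qed (use others j C2_def in auto)
    qed
    then have "refine_child X K M C2" unfolding refine_child_def Let_def
      using k amax C2_def l_def u_def mid_def T_def f_def by blast
    then show ?thesis by blast
  qed
qed


lemma half_sub1:
  fixes l u :: "real^'n::finite"
  assumes "l $ a \<le> u $ a"
  shows "cbox l (\<chi> i. if i = a then (l $ a + u $ a) / 2 else u $ i) \<subseteq> cbox l u"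
proof
  fix x assume x: "x \<in> cbox l (\<chi> i. if i = a then (l $ a + u $ a) / 2 else u $ i)"
  have "l $ i \<le> x $ i \<and> x $ i \<le> u $ i" for i
    using x[unfolded mem_box_cart, rule_format, of i] assms by (cases "i = a") auto
  then show "x \<in> cbox l u" by (simp add: mem_box_cart)
qed

lemma half_sub2:
  fixes l u :: "real^'n::finite"
  assumes "l $ a \<le> u $ a"
  shows "cbox (\<chi> i. if i = a then (l $ a + u $ a) / 2 else l $ i) u \<subseteq> cbox l u"
proof
  fix x assume x: "x \<in> cbox (\<chi> i. if i = a then (l $ a + u $ a) / 2 else l $ i) u"
  have "l $ i \<le> x $ i \<and> x $ i \<le> u $ i" for i
    using x[unfolded mem_box_cart, rule_format, of i] assms by (cases "i = a") auto
  then show "x \<in> cbox l u" by (simp add: mem_box_cart)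
qed

definition meas :: "(real^'n::finite) set \<Rightarrow> nat \<Rightarrow> 'n node \<Rightarrow> nat" where
  "meas X K M = (\<Sum>k<K. card (X \<inter> boxset (M k)))"

lemma decrease:
  assumes fin: "finite X" and valid: "node_valid X K M" and r: "refine_child X K M C"
  shows "meas X K C < meas X K M"
proof -
  define T where "T = tighten X M"
  have same: "X \<inter> boxset (T k) = X \<inter> boxset (M k)" if "k < K" for k
    using hull_same[OF fin] valid that unfolding T_def tighten_def node_valid_def by auto
  from r obtain k a where k: "k < K" and c: "card (X \<inter> boxset (T k)) > 1"
    and amax: "\<forall>a'. snd (T k) $ a' - fst (T k) $ a' \<le> snd (T k) $ a - fst (T k) $ a"
    and C: "C = T(k := (fst (T k), \<chi> i. if i = a then (fst (T k) $ a + snd (T k) $ a) / 2 else snd (T k) $ i))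
         \<or> C = T(k := (\<chi> i. if i = a then (fst (T k) $ a + snd (T k) $ a) / 2 else fst (T k) $ i, snd (T k)))"
    unfolding refine_child_def Let_def T_def by blast
  have ne: "X \<inter> boxset (M k) \<noteq> {}" using valid k node_valid_def by auto
  have Tk: "T k = hullbox X (M k)" unfolding T_def tighten_def by simp
  note tp = tight_props[OF fin ne c[unfolded Tk] amax[unfolded Tk], folded Tk]
  define l where "l = fst (T k)"
  define u where "u = snd (T k)"
  define mid where "mid = (l $ a + u $ a) / 2"
  have lu: "l $ a < mid" "mid < u $ a" using tp(3) unfolding mid_def l_def u_def by auto
  have lei: "\<forall>i. l $ i \<le> u $ i" using tp(4) l_def u_def by auto
  obtain y where y: "y \<in> X \<inter> boxset (M k)" "y $ a = u $ a" using tp(1) u_def by auto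
  obtain z where z: "z \<in> X \<inter> boxset (M k)" "z $ a = l $ a" using tp(2) l_def by auto
  have sub: "X \<inter> boxset (C k) \<subset> X \<inter> boxset (M k)"
  proof -
    have Tkb: "boxset (T k) = cbox l u" unfolding boxset_def l_def u_def by simp
    from C show ?thesis
    proof
      assume C1: "C = T(k := (fst (T k), \<chi> i. if i = a then (fst (T k) $ a + snd (T k) $ a) / 2 else snd (T k) $ i))"
      have "boxset (C k) \<subseteq> boxset (T k)" unfolding C1 Tkb using lu half_sub1[of l a u, unfolded l_def u_def]
        by (simp add: boxset_def l_def u_def mid_def)
      moreover have "y \<notin> boxset (C k)" unfolding C1 using y lu
        by (auto simp: boxset_def mem_box_cart l_def u_def mid_def)
      ultimately show ?thesis using same[OF k] y by blast
    next
      assume C2: "C = T(k := (\<chi> i. if i = a then (fst (T k) $ a + snd (T k) $ a) / 2 else fst (T k) $ i, snd (T k)))"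
      have "boxset (C k) \<subseteq> boxset (T k)" unfolding C2 Tkb using lu half_sub2[of l a u, unfolded l_def u_def]
        by (simp add: boxset_def l_def u_def mid_def)
      moreover have "z \<notin> boxset (C k)" unfolding C2 using z lu
        by (auto simp: boxset_def mem_box_cart l_def u_def mid_def)
      ultimately show ?thesis using same[OF k] z by blast
    qed
  qed
  have eqj: "C j = T j" if "j \<noteq> k" for j using C that by auto
  show ?thesis unfolding meas_def
  proof (rule sum_strict_mono_ex1)
    show "finite {..<K}" by simp
    show "\<forall>j\<in>{..<K}. card (X \<inter> boxset (C j)) \<le> card (X \<inter> boxset (M j))"
    proof
      fix j assume j: "j \<in> {..<K}"
      show "card (X \<inter> boxset (C j)) \<le> card (X \<inter> boxset (M j))"
      proof (cases "j = k")
        case True then show ?thesis using sub fin by (intro card_mono) auto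
      qed (use eqj same j in auto)
    qed
    show "\<exists>j\<in>{..<K}. card (X \<inter> boxset (C j)) < card (X \<inter> boxset (M j))"
      using k sub fin by (intro bexI[of _ k] psubset_card_mono) auto
  qed
qed

theorem lemma3:
  fixes X :: "(real^'n::finite) set" and K :: nat
  assumes "finite X" and "K \<ge> 1"
  shows "(\<forall>M mu alpha.
            node_valid X K M \<and>
            (\<forall>k<K. mu k \<in> X \<inter> boxset (tighten X M k)) \<and>
            alpha \<le> kcenter_obj X K mu \<and>
            lower_bound X K (tighten X M) < alpha
            \<longrightarrow> (\<exists>C. refine_child X K M C))
       \<and> \<not> (\<exists>Ms :: nat \<Rightarrow> 'n node.
              node_valid X K (Ms 0) \<and> (\<forall>q. refine_child X K (Ms q) (Ms (Suc q))))"
proof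
  show "\<forall>M mu alpha.
            node_valid X K M \<and>
            (\<forall>k<K. mu k \<in> X \<inter> boxset (tighten X M k)) \<and>
            alpha \<le> kcenter_obj X K mu \<and>
            lower_bound X K (tighten X M) < alpha
            \<longrightarrow> (\<exists>C. refine_child X K M C)"
    using part1[OF assms] by blast
  show "\<not> (\<exists>Ms :: nat \<Rightarrow> 'n node.
              node_valid X K (Ms 0) \<and> (\<forall>q. refine_child X K (Ms q) (Ms (Suc q))))"
  proof
    assume "\<exists>Ms :: nat \<Rightarrow> 'n node.
              node_valid X K (Ms 0) \<and> (\<forall>q. refine_child X K (Ms q) (Ms (Suc q)))"
    then obtain Ms :: "nat \<Rightarrow> 'n node" where v0: "node_valid X K (Ms 0)"
      and r: "\<And>q. refine_child X K (Ms q) (Ms (Suc q))" by blast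
    have v: "node_valid X K (Ms q)" for q
      using v0 r by (cases q) (auto simp: refine_child_def Let_def)
    have "meas X K (Ms q) + q \<le> meas X K (Ms 0)" for q
    proof (induction q)
      case (Suc q)
      have "meas X K (Ms (Suc q)) < meas X K (Ms q)" using decrease[OF assms(1) v r] .
      then show ?case using Suc by simp
    qed simp
    from this[of "Suc (meas X K (Ms 0))"] show False by simp
  qed
qed

end
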